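(* Let $p$ be a seminorm on $\mathbb{R}^d$ and let $T:\mathbb{R}^d\to\mathbb{R}^d$ be a $\gamma$-contraction mapping with respect to $p$, i.e. there is $\gamma\in[0,1)$ with $p(T(x)-T(y))\le \gamma\, p(x-y)$ for all $x,y\in\mathbb{R}^d$. Then there exists $x^*\in\mathbb{R}^d$ such that $p(T(x^* )-x^* )=0$. In addition, for any $x_0\in\mathbb{R}^d$, the sequence $\{x_k\}$ generated by $x_{k+1}=T(x_k)$ satisfies $$p(x_k-x^* )\le \gamma^k\, p(x_0-x^* )\quad\text{for all } k\ge 0.$$
   Context: A seminorm on $\mathbb{R}^d$ is a function $p:\mathbb{R}^d\to[0,\infty)$ with $p(\alpha x)=|\alpha|p(x)$ and $p(x+y)\le p(x)+p(y)$ for all $x,y\in\mathbb{R}^d$, $\alpha\in\mathbb{R}$ (it need not satisfy $p(x)=0\Rightarrow x=0$). *)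

theory Defs
  imports "HOL-Analysis.Analysis"
begin

definition is_seminorm :: "(real ^ 'd \<Rightarrow> real) \<Rightarrow> bool" where
  "is_seminorm p \<longleftrightarrow>
     (\<forall>x. 0 \<le> p x) \<and>
     (\<forall>a x. p (a *\<^sub>R x) = \<bar>a\<bar> * p x) \<and>
     (\<forall>x y. p (x + y) \<le> p x + p y)"

end

theory Submission
  imports Defs
begin

locale sn =
  fixes p :: "real ^ 'd \<Rightarrow> real"
  assumes sn: "is_seminorm p"
begin

lemma nonneg: "0 \<le> p x" using sn unfolding is_seminorm_def by blast
lemma scale: "p (a *\<^sub>R x) = \<bar>a\<bar> * p x" using sn unfolding is_seminorm_def by blast
lemma tri: "p (x + y) \<le> p x + p y" using sn unfolding is_seminorm_def by blast
lemma zero: "p 0 = 0" using scale[of 0 0] by simp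
lemma neg: "p (- x) = p x" using scale[of "-1" x] by simp
lemma comm: "p (x - y) = p (y - x)" using neg[of "x - y"] by simp
lemma tri3: "p (x - z) \<le> p (x - y) + p (y - z)"
  using tri[of "x - y" "y - z"] by simp

lemma cont: "isCont p x"
proof -
  have "convex_on UNIV p"
    unfolding convex_on_def
  proof (intro conjI ballI allI impI; simp?)
    fix x y :: "real ^ 'd" and u v :: real
    assume "0 \<le> u" "0 \<le> v"
    then show "p (u *\<^sub>R x + v *\<^sub>R y) \<le> u * p x + v * p y"
      using tri[of "u *\<^sub>R x" "v *\<^sub>R y"] scale[of u x] scale[of v y] by simp
  qed
  then have "continuous_on UNIV p" by (rule convex_on_continuous[OF open_UNIV])
  then show ?thesis by (simp add: continuous_on_eq_continuous_at)
qed

definition "N = {x. p x = 0}"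
definition "W = {y. \<forall>x \<in> N. orthogonal x y}"

lemma subN: "subspace N"
  unfolding subspace_def N_def
proof (intro conjI ballI allI; simp add: zero)
  fix x y assume "p x = 0" "p y = 0"
  then show "p (x + y) = 0" using tri[of x y] nonneg[of "x+y"] by simp
next
  fix c x assume "p x = 0" then show "p (c *\<^sub>R x) = 0" by (simp add: scale)
qed

lemma subW: "subspace W" unfolding W_def by (rule subspace_orthogonal_to_vectors)
lemma closedW: "closed W" by (rule closed_subspace[OF subW])

lemma decomp: "\<exists>z. z \<in> W \<and> x - z \<in> N"
proof -
  obtain y z where yz: "y \<in> span N" "\<And>w. w \<in> span N \<Longrightarrow> orthogonal z w" "x = y + z"
    using orthogonal_subspace_decomp_exists[of N x] by blast
  have sp: "span N = N" using subN by (rule span_eq_iff[THEN iffD2])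
  have "z \<in> W" unfolding W_def
  proof (rule CollectI, rule ballI)
    fix w assume "w \<in> N"
    then have "orthogonal z w" using yz(2) sp by simp
    then show "orthogonal w z" by (rule orthogonal_commute[THEN iffD1])
  qed
  moreover have "x - z \<in> N" using yz(1,3) sp by simp
  ultimately show ?thesis by blast
qed

definition "proj x = (SOME z. z \<in> W \<and> x - z \<in> N)"

lemma proj: "proj x \<in> W" "p (x - proj x) = 0"
proof -
  have "proj x \<in> W \<and> x - proj x \<in> N"
    unfolding proj_def by (rule someI_ex[OF decomp[of x]])
  then show "proj x \<in> W" "p (x - proj x) = 0" unfolding N_def by auto
qed

lemma pos: "w \<in> W \<Longrightarrow> p w = 0 \<Longrightarrow> w = 0"
proof -
  assume "w \<in> W" "p w = 0"
  then have "w \<in> N" "\<forall>x\<in>N. orthogonal x w" unfolding N_def W_def by auto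
  then have "w \<bullet> w = 0" unfolding orthogonal_def by blast
  then show "w = 0" by simp
qed

lemma lower: "\<exists>c>0. \<forall>w\<in>W. c * norm w \<le> p w"
proof (cases "W \<inter> sphere 0 1 = {}")
  case True
  have z0: "w = 0" if "w \<in> W" for w
  proof (rule ccontr)
    assume "w \<noteq> 0"
    then have "(1 / norm w) *\<^sub>R w \<in> W \<inter> sphere 0 1"
      using that subW by (simp add: subspace_scale)
    then show False using True by blast
  qed
  show ?thesis
  proof (intro exI[of _ 1] conjI ballI)
    fix w assume "w \<in> W"
    then have "w = 0" by (rule z0)
    then show "1 * norm w \<le> p w" by (simp add: zero)
  qed simp
next
  case False
  have "compact (W \<inter> sphere 0 1)"
    by (rule closed_Int_compact[OF closedW compact_sphere])
  moreover have "continuous_on (W \<inter> sphere 0 1) p"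
    using cont by (simp add: continuous_at_imp_continuous_on)
  ultimately obtain s where s: "s \<in> W \<inter> sphere 0 1" "\<And>y. y \<in> W \<inter> sphere 0 1 \<Longrightarrow> p s \<le> p y"
    using continuous_attains_inf[of "W \<inter> sphere 0 1" p] False by blast
  have "p s \<noteq> 0" using pos[of s] s(1) by auto
  then have cpos: "p s > 0" using nonneg[of s] by linarith
  have key: "p s * norm w \<le> p w" if "w \<in> W" for w
  proof (cases "w = 0")
    case True then show ?thesis by (simp add: zero)
  next
    case False
    then have "(1 / norm w) *\<^sub>R w \<in> W \<inter> sphere 0 1"
      using that subW by (simp add: subspace_scale)
    then have "p s \<le> p ((1 / norm w) *\<^sub>R w)" using s(2) by blast
    also have "\<dots> = p w / norm w" by (simp add: scale)
    finally show ?thesis using False by (simp add: field_simps)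
  qed
  show ?thesis
    by (rule exI[of _ "p s"]) (use cpos key in blast)
qed

lemma fixpt:
  fixes T :: "real ^ 'd \<Rightarrow> real ^ 'd" and \<gamma> :: real
  assumes "\<gamma> < 1" and con: "\<And>x y. p (T x - T y) \<le> \<gamma> * p (x - y)"
  shows "\<exists>xs. p (T xs - xs) = 0"
proof -
  have ms: "Metric_space W (\<lambda>u v. p (u - v))"
  proof
    show "0 \<le> p (x - y)" for x y by (rule nonneg)
    show "p (x - y) = p (y - x)" for x y by (rule comm)
    show "p (x - z) \<le> p (x - y) + p (y - z)" for x y z by (rule tri3)
    fix x y assume "x \<in> W" "y \<in> W"
    then have "x - y \<in> W" using subW by (simp add: subspace_diff)
    then show "p (x - y) = 0 \<longleftrightarrow> x = y" using pos[of "x - y"] zero by auto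
  qed
  obtain c where c: "c > 0" "\<And>w. w \<in> W \<Longrightarrow> c * norm w \<le> p w" using lower by blast
  have "Metric_space.mcomplete W (\<lambda>u v. p (u - v))"
    unfolding Metric_space.mcomplete_def[OF ms]
  proof (intro allI impI)
    fix \<sigma> assume cs: "Metric_space.MCauchy W (\<lambda>u v. p (u - v)) \<sigma>"
    then have inW: "\<sigma> n \<in> W" for n unfolding Metric_space.MCauchy_def[OF ms] by auto
    have "Cauchy \<sigma>"
    proof (rule metric_CauchyI)
      fix e :: real assume "e > 0"
      then have "c * e > 0" using c by simp
      then obtain K where K: "\<And>n n'. K \<le> n \<Longrightarrow> K \<le> n' \<Longrightarrow> p (\<sigma> n - \<sigma> n') < c * e"
        using cs \<open>c * e > 0\<close> unfolding Metric_space.MCauchy_def[OF ms] by blast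
      show "\<exists>K. \<forall>m\<ge>K. \<forall>n\<ge>K. dist (\<sigma> m) (\<sigma> n) < e"
      proof (intro exI allI impI)
        fix m n assume "K \<le> m" "K \<le> n"
        have "\<sigma> m - \<sigma> n \<in> W" using inW subW by (simp add: subspace_diff)
        then have "c * norm (\<sigma> m - \<sigma> n) \<le> p (\<sigma> m - \<sigma> n)" by (rule c(2))
        then have "c * norm (\<sigma> m - \<sigma> n) < c * e" using K[OF \<open>K \<le> m\<close> \<open>K \<le> n\<close>] by linarith
        then show "dist (\<sigma> m) (\<sigma> n) < e" using c(1) by (simp add: dist_norm)
      qed
    qed
    then obtain l where l: "\<sigma> \<longlonglongrightarrow> l" using Cauchy_convergent_iff convergent_def by blast
    have lW: "l \<in> W" using closed_sequentially[OF closedW _ l] inW by blast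
    have "(\<lambda>n. p (\<sigma> n - l)) \<longlonglongrightarrow> p (l - l)"
      by (rule isCont_tendsto_compose[OF cont tendsto_diff[OF l tendsto_const]])
    then have lim: "(\<lambda>n. p (\<sigma> n - l)) \<longlonglongrightarrow> 0" by (simp add: zero)
    have "limitin (Metric_space.mtopology W (\<lambda>u v. p (u - v))) \<sigma> l sequentially"
      unfolding Metric_space.limitin_metric[OF ms]
    proof (intro conjI allI impI lW)
      fix e :: real assume "e > 0"
      then have "\<forall>\<^sub>F n in sequentially. p (\<sigma> n - l) < e"
        using lim order_tendstoD(2) by blast
      then show "\<forall>\<^sub>F n in sequentially. \<sigma> n \<in> W \<and> p (\<sigma> n - l) < e"
        using inW by simp
    qed
    then show "\<exists>x. limitin (Metric_space.mtopology W (\<lambda>u v. p (u - v))) \<sigma> x sequentially" by blast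
  qed
  note mc = this
  have ne: "W \<noteq> {}" using subW subspace_0 by blast
  have fim: "(proj \<circ> T) \<in> W \<rightarrow> W" using proj(1) by auto
  have contr: "p ((proj \<circ> T) x - (proj \<circ> T) y) \<le> \<gamma> * p (x - y)" if "x \<in> W" "y \<in> W" for x y
  proof -
    have "p (proj (T x) - proj (T y)) \<le> p (proj (T x) - T x) + p (T x - proj (T y))" by (rule tri3)
    also have "\<dots> \<le> p (proj (T x) - T x) + (p (T x - T y) + p (T y - proj (T y)))"
      using tri3[of "T x" "proj (T y)" "T y"] by simp
    also have "\<dots> = p (T x - T y)" using proj(2)[of "T x"] proj(2)[of "T y"] comm[of "proj (T x)" "T x"] by simp
    finally show ?thesis using con[of x y] by simp
  qed
  have "\<exists>w. w \<in> W \<and> (proj \<circ> T) w = w"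
  proof -
    note B = Metric_space.Banach_fixedpoint_thm[OF ms, where f="proj \<circ> T" and k=\<gamma>]
    show ?thesis
      apply (rule B)
      using mc ne fim assms(1) contr by blast+
  qed
  then obtain w where "w \<in> W" "(proj \<circ> T) w = w" by blast
  then have "p (T w - w) = 0" using proj(2)[of "T w"] by simp
  then show ?thesis by blast
qed

end

theorem theorem1:
  fixes p :: "real ^ 'd \<Rightarrow> real" and T :: "real ^ 'd \<Rightarrow> real ^ 'd" and \<gamma> :: real
  assumes "is_seminorm p"
    and "0 \<le> \<gamma>" and "\<gamma> < 1"
    and "\<forall>x y. p (T x - T y) \<le> \<gamma> * p (x - y)"
  shows "\<exists>xs. p (T xs - xs) = 0 \<and>
           (\<forall>x0 k. p ((T ^^ k) x0 - xs) \<le> \<gamma> ^ k * p (x0 - xs))"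
proof -
  interpret sn p by (rule sn.intro) fact
  have con: "\<And>x y. p (T x - T y) \<le> \<gamma> * p (x - y)" using assms(4) by blast
  obtain xs where xs: "p (T xs - xs) = 0" using fixpt[OF assms(3) con] by blast
  have "p ((T ^^ k) x0 - xs) \<le> \<gamma> ^ k * p (x0 - xs)" for x0 k
  proof (induction k)
    case 0 then show ?case by simp
  next
    case (Suc k)
    have "p ((T ^^ Suc k) x0 - xs) \<le> p (T ((T ^^ k) x0) - T xs) + p (T xs - xs)"
      using tri3[of "T ((T ^^ k) x0)" xs "T xs"] by simp
    also have "\<dots> \<le> \<gamma> * p ((T ^^ k) x0 - xs)" using con[of "(T ^^ k) x0" xs] xs by linarith
    also have "\<dots> \<le> \<gamma> * (\<gamma> ^ k * p (x0 - xs))" using Suc assms(2) by (rule mult_left_mono)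
    finally show ?case by simp
  qed
  then show ?thesis using xs by blast
qed

end
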